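(* Assume the hypotheses in the context. Let $u\in\mathbb{U}_{\rm ad}$ and $y_0\in\mathbb{R}^n$, and for a time step $h>0$ let $\boldsymbol u=\{u(t_0),u(t_1),\dots\}$ with $t_i=ih$. Then $$\lim_{h\to0,\,k\to0}\left|\hat J(y_0,u)-\hat J_{h,k}(y_0,\boldsymbol u)\right|=0.$$
   Context: Let $f:\mathbb{R}^n\times\mathbb{R}^m\to\mathbb{R}^n$ and $g:\mathbb{R}^n\times\mathbb{R}^m\to\mathbb{R}$, $\lambda>0$, and $U_{\rm ad}\subset\mathbb{R}^m$ compact and convex. Hypotheses: $\|f(y,u)-f(\tilde y,u)\|_2\le L_f\|y-\tilde y\|_2$ and $\|f(y,u)-f(y,\tilde u)\|_2\le L_f\|u-\tilde u\|_2$ for all $y,\tilde y\in\mathbb{R}^n$, $u,\tilde u\in U_{\rm ad}$; $|g(y,u)-g(\tilde y,u)|\le L_g\|y-\tilde y\|_2$ and $|g(y,u)-g(y,\tilde u)|\le L_g\|u-\tilde u\|_2$ likewise; $f,g$ continuous; $\overline\Omega\subset\mathbb{R}^n$ is a bounded polyhedron with $\max_{1\le i\le n}|f_i(y,u)|\le M_f$ and $|g(y,u)|\le M_g$ for all $(y,u)\in\overline\Omega\times U_{\rm ad}$ (and $y+hf(y,u)\in\overline\Omega$ for $y\in\overline\Omega$, $u\in U_{\rm ad}$, $h$ small). Admissible controls: $\mathbb{U}_{\rm ad}=\{u\in L^2(0,\infty;\mathbb{R}^m): u(t)\in U_{\rm ad}\text{ a.e.}\}$, and controls are assumed Lipschitz: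 $\|u(t)-u(s)\|_2\le L_u|t-s|$. For $u\in\mathbb{U}_{\rm ad}$, $y(t)=y(y_0,u)(t)$ is the solution of $\dot y=f(y,u)$, $y(0)=y_0$, and $\hat J(y_0,u)=\int_0^\infty g(y(t),u(t))e^{-\lambda t}\,dt$. Fully discrete setting: a regular triangulation $\{S_j\}$ of $\overline\Omega$ by simplices with vertices $y_1,\dots,y_{n_s}$ and $k=\max_j\operatorname{diam}S_j$; $I_k$ denotes piecewise linear interpolation in the $y$ variable at the vertices. For a sequence $\boldsymbol u=\{u_0,u_1,\dots\}\subset U_{\rm ad}$ and $\delta_h=1-\lambda h$: $\hat y_0=y_0$, $\hat y_{n+1}=\hat y_n+hI_kf(\hat y_n,u_n)$, and $\hat J_{h,k}(y_0,\boldsymbol u)=h\sum_{n=0}^\infty\delta_h^n I_kg(\hat y_n,u_n)$. *)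

theory Defs
  imports "HOL-Analysis.Analysis"
begin

definition vertices_of :: "'a::euclidean_space set \<Rightarrow> 'a set" where
  "vertices_of S = {v. v extreme_point_of S}"

definition mesh :: "'a::euclidean_space set set \<Rightarrow> real" where
  "mesh \<T> = Max (diameter ` \<T>)"

definition interp :: "'a::euclidean_space set set \<Rightarrow> ('a \<Rightarrow> 'b::real_vector) \<Rightarrow> 'a \<Rightarrow> 'b" where
  "interp \<T> \<phi> y = (SOME z. \<exists>S\<in>\<T>. y \<in> S \<and>
      (\<exists>c. (\<forall>v\<in>vertices_of S. 0 \<le> c v) \<and> sum c (vertices_of S) = 1 \<and>
           (\<Sum>v\<in>vertices_of S. c v *\<^sub>R v) = y \<and>
           z = (\<Sum>v\<in>vertices_of S. c v *\<^sub>R \<phi> v)))"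

primrec yhat :: "('a::euclidean_space \<Rightarrow> 'c \<Rightarrow> 'a) \<Rightarrow> 'a set set \<Rightarrow> real \<Rightarrow> (nat \<Rightarrow> 'c) \<Rightarrow> 'a \<Rightarrow> nat \<Rightarrow> 'a" where
  "yhat f \<T> h uu y0 0 = y0"
| "yhat f \<T> h uu y0 (Suc n) =
     yhat f \<T> h uu y0 n + h *\<^sub>R interp \<T> (\<lambda>z. f z (uu n)) (yhat f \<T> h uu y0 n)"

definition J_hk :: "('a::euclidean_space \<Rightarrow> 'c \<Rightarrow> 'a) \<Rightarrow> ('a \<Rightarrow> 'c \<Rightarrow> real) \<Rightarrow> real \<Rightarrow>
    'a set set \<Rightarrow> real \<Rightarrow> (nat \<Rightarrow> 'c) \<Rightarrow> 'a \<Rightarrow> real" where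
  "J_hk f g lam \<T> h uu y0 =
     h * (\<Sum>n. (1 - lam * h) ^ n * interp \<T> (\<lambda>z. g z (uu n)) (yhat f \<T> h uu y0 n))"

definition J_cont :: "('a \<Rightarrow> 'c \<Rightarrow> real) \<Rightarrow> real \<Rightarrow> (real \<Rightarrow> 'a) \<Rightarrow> (real \<Rightarrow> 'c) \<Rightarrow> real" where
  "J_cont g lam y u = (LINT t:{0..}|lborel. g (y t) (u t) * exp (- lam * t))"

end

theory Submission
  imports Defs
begin

lemma tri_simplex: "triangulation \<T> \<Longrightarrow> S \<in> \<T> \<Longrightarrow> \<exists>n. n simplex S"
  unfolding triangulation_def by (elim conjE) (erule bspec)

lemma tri_finite: "triangulation \<T> \<Longrightarrow> finite \<T>"
  unfolding triangulation_def by (elim conjE)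

lemma interp_ex:
  fixes \<T> :: "'a::euclidean_space set set" and \<phi> :: "'a \<Rightarrow> 'b::real_vector"
  assumes tri: "triangulation \<T>" and y: "y \<in> \<Union>\<T>"
  shows "\<exists>S\<in>\<T>. y \<in> S \<and> finite (vertices_of S) \<and> vertices_of S \<subseteq> S \<and>
      (\<exists>c. (\<forall>v\<in>vertices_of S. 0 \<le> c v) \<and> sum c (vertices_of S) = 1 \<and>
           (\<Sum>v\<in>vertices_of S. c v *\<^sub>R v) = y \<and>
           interp \<T> \<phi> y = (\<Sum>v\<in>vertices_of S. c v *\<^sub>R \<phi> v))"
proof -
  have P: "finite (vertices_of S) \<and> vertices_of S \<subseteq> S \<and> S = convex hull (vertices_of S)" if ST: "S \<in> \<T>" for S
  proof -
    obtain n where "n simplex S" using tri_simplex[OF tri ST] by blast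
    then obtain C where C: "finite C" "S = convex hull C"
      unfolding simplex by blast
    have sub: "vertices_of S \<subseteq> C" unfolding vertices_of_def C(2)
      using extreme_point_of_convex_hull by blast
    have "compact S" "convex S" using C by (auto simp: finite_imp_compact_convex_hull)
    then have "S = convex hull (vertices_of S)" unfolding vertices_of_def
      by (rule Krein_Milman_Minkowski)
    moreover have "vertices_of S \<subseteq> S" unfolding vertices_of_def
      using extreme_point_of_def by blast
    moreover have "finite (vertices_of S)" using sub C(1) by (rule finite_subset)
    ultimately show ?thesis by blast
  qed
  obtain S where S: "S \<in> \<T>" "y \<in> S" using y by blast
  with P have fin: "finite (vertices_of S)" and sub: "vertices_of S \<subseteq> S"
    and hull: "S = convex hull (vertices_of S)" by auto
  have "y \<in> convex hull (vertices_of S)" using S(2) hull by simp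
  then have "y \<in> {y. \<exists>c. (\<forall>x\<in>vertices_of S. 0 \<le> c x) \<and> sum c (vertices_of S) = 1 \<and> (\<Sum>x\<in>vertices_of S. c x *\<^sub>R x) = y}"
    unfolding convex_hull_finite[OF fin] .
  then obtain c where c: "(\<forall>v\<in>vertices_of S. 0 \<le> c v)" "sum c (vertices_of S) = 1"
           "(\<Sum>v\<in>vertices_of S. c v *\<^sub>R v) = y"
    by blast
  let ?Q = "\<lambda>z. \<exists>S\<in>\<T>. y \<in> S \<and>
      (\<exists>c. (\<forall>v\<in>vertices_of S. 0 \<le> c v) \<and> sum c (vertices_of S) = 1 \<and>
           (\<Sum>v\<in>vertices_of S. c v *\<^sub>R v) = y \<and>
           z = (\<Sum>v\<in>vertices_of S. c v *\<^sub>R \<phi> v))"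
  have "?Q (\<Sum>v\<in>vertices_of S. c v *\<^sub>R \<phi> v)" using S c by blast
  then have "?Q (interp \<T> \<phi> y)" unfolding interp_def by (rule someI)
  then show ?thesis using P by blast
qed

lemma interp_close:
  fixes \<T> :: "'a::euclidean_space set set" and \<phi> :: "'a \<Rightarrow> 'b::real_normed_vector"
  assumes tri: "triangulation \<T>" and y: "y \<in> \<Union>\<T>"
    and e: "\<And>v. v \<in> \<Union>\<T> \<Longrightarrow> dist v y \<le> mesh \<T> \<Longrightarrow> norm (\<phi> v - \<phi> y) \<le> e"
  shows "norm (interp \<T> \<phi> y - \<phi> y) \<le> e"
proof -
  obtain S c where S: "S\<in>\<T>" "y \<in> S" "finite (vertices_of S)" "vertices_of S \<subseteq> S"
     and c: "(\<forall>v\<in>vertices_of S. 0 \<le> c v)" "sum c (vertices_of S) = 1"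
     and I: "interp \<T> \<phi> y = (\<Sum>v\<in>vertices_of S. c v *\<^sub>R \<phi> v)"
    using interp_ex[OF tri y, of \<phi>] by blast
  have fT: "finite \<T>" using tri_finite[OF tri] .
  have bS: "bounded S"
  proof -
    obtain n where "n simplex S" using tri_simplex[OF tri S(1)] by blast
    then obtain C where C: "finite C" "S = convex hull C" unfolding simplex by blast
    then show ?thesis by (simp add: compact_imp_bounded finite_imp_compact_convex_hull)
  qed
  have dS: "diameter S \<le> mesh \<T>" unfolding mesh_def using fT S(1) by (simp add: Max_ge)
  have vb: "norm (\<phi> v - \<phi> y) \<le> e" if "v \<in> vertices_of S" for v
  proof (rule e)
    show "v \<in> \<Union>\<T>" using that S by blast
    show "dist v y \<le> mesh \<T>" using diameter_bounded_bound[OF bS, of v y] that S dS by auto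
  qed
  have "interp \<T> \<phi> y - \<phi> y = (\<Sum>v\<in>vertices_of S. c v *\<^sub>R (\<phi> v - \<phi> y))"
    using c by (simp add: I scaleR_diff_right sum_subtractf flip: scaleR_left.sum)
  also have "norm \<dots> \<le> (\<Sum>v\<in>vertices_of S. c v * e)"
    by (rule order_trans[OF norm_sum sum_mono]) (use c vb in \<open>auto intro: mult_left_mono\<close>)
  also have "\<dots> = e" using c by (simp flip: sum_distrib_right)
  finally show ?thesis .
qed

lemma interp_in:
  fixes \<T> :: "'a::euclidean_space set set" and \<phi> :: "'a \<Rightarrow> 'b::real_normed_vector"
  assumes tri: "triangulation \<T>" and y: "y \<in> \<Union>\<T>" and K: "convex K"
    and e: "\<And>v. v \<in> \<Union>\<T> \<Longrightarrow> \<phi> v \<in> K"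
  shows "interp \<T> \<phi> y \<in> K"
proof -
  obtain S c where S: "S\<in>\<T>" "y \<in> S" "finite (vertices_of S)" "vertices_of S \<subseteq> S"
     and c: "(\<forall>v\<in>vertices_of S. 0 \<le> c v)" "sum c (vertices_of S) = 1"
     and I: "interp \<T> \<phi> y = (\<Sum>v\<in>vertices_of S. c v *\<^sub>R \<phi> v)"
    using interp_ex[OF tri y, of \<phi>] by blast
  show ?thesis unfolding I
    by (rule convex_sum[OF S(3) K c(2)]) (use c S e in auto)
qed

lemma interp_step_in:
  fixes \<T> :: "'a::euclidean_space set set" and F :: "'a \<Rightarrow> 'a"
  assumes tri: "triangulation \<T>" and y: "y \<in> \<Union>\<T>" and K: "convex (\<Union>\<T>)"
    and e: "\<And>v. v \<in> \<Union>\<T> \<Longrightarrow> v + h *\<^sub>R F v \<in> \<Union>\<T>"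
  shows "y + h *\<^sub>R interp \<T> F y \<in> \<Union>\<T>"
proof -
  obtain S c where S: "S\<in>\<T>" "y \<in> S" "finite (vertices_of S)" "vertices_of S \<subseteq> S"
     and c: "(\<forall>v\<in>vertices_of S. 0 \<le> c v)" "sum c (vertices_of S) = 1"
     and cy: "(\<Sum>v\<in>vertices_of S. c v *\<^sub>R v) = y"
     and I: "interp \<T> F y = (\<Sum>v\<in>vertices_of S. c v *\<^sub>R F v)"
    using interp_ex[OF tri y, of F] by blast
  have vin: "v + h *\<^sub>R F v \<in> \<Union>\<T>" if v: "v \<in> vertices_of S" for v
  proof (rule e)
    have "v \<in> S" using S(4) v by (rule subsetD)
    then show "v \<in> \<Union>\<T>" by (rule UnionI[OF S(1)])
  qed
  have "y + h *\<^sub>R interp \<T> F y = (\<Sum>v\<in>vertices_of S. c v *\<^sub>R v) + h *\<^sub>R (\<Sum>v\<in>vertices_of S. c v *\<^sub>R F v)"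
    using I cy by simp
  also have "\<dots> = (\<Sum>v\<in>vertices_of S. c v *\<^sub>R (v + h *\<^sub>R F v))"
    by (simp add: scaleR_right_distrib sum.distrib scaleR_sum_right mult.commute)
  also have "\<dots> \<in> \<Union>\<T>"
  proof (rule convex_sum[OF S(3) K c(2)])
    fix i assume "i \<in> vertices_of S" then show "0 \<le> c i" using c(1) by blast
  next
    fix i assume "i \<in> vertices_of S" then show "i + h *\<^sub>R F i \<in> \<Union>\<T>" by (rule vin)
  qed
  finally show ?thesis .
qed

lemma gronwall_disc:
  fixes E :: "nat \<Rightarrow> real"
  assumes E0: "E 0 \<le> 0" and Qd: "\<And>n. Q (Suc n) \<Longrightarrow> Q n"
    and step: "\<And>n. Q (Suc n) \<Longrightarrow> E (Suc n) \<le> (1 + h*L) * E n + h*D"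
    and h: "0 \<le> h" and L: "0 \<le> L" and D: "0 \<le> D"
  shows "Q n \<Longrightarrow> E n \<le> real n * h * (1+h*L)^n * D"
proof -
  define p where "p = 1 + h*L"
  have p1: "1 \<le> p" using h L by (simp add: p_def)
  have "Q n \<Longrightarrow> E n \<le> real n * h * p^n * D"
  proof (induction n)
    case 0
    then show ?case using E0 by simp
  next
    case (Suc n)
    have IH: "E n \<le> real n * h * p^n * D" using Suc Qd by blast
    have hD: "h * D \<le> h * D * p^(Suc n)"
    proof -
      have "1 \<le> p^(Suc n)" using p1 by (rule one_le_power)
      then have "h * D * 1 \<le> h * D * p^(Suc n)" using h D by (intro mult_left_mono) auto
      then show ?thesis by simp
    qed
    have pe: "p * (real n * h * p^n * D) = real n * h * D * p^(Suc n)" by simp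
    have "E (Suc n) \<le> p * E n + h*D" using step Suc unfolding p_def by blast
    also have "\<dots> \<le> p * (real n * h * p^n * D) + h * D"
      using IH p1 by (intro add_right_mono mult_left_mono) auto
    also have "\<dots> \<le> real n * h * D * p^(Suc n) + h * D * p^(Suc n)"
      using hD pe by linarith
    also have "\<dots> = real (Suc n) * h * p^(Suc n) * D" by (simp add: distrib_right)
    finally show ?case .
  qed
  then show "Q n \<Longrightarrow> E n \<le> real n * h * (1+h*L)^n * D" unfolding p_def .
qed

lemma pow_le_exp:
  fixes x :: real assumes "0 \<le> x" shows "(1+x)^n \<le> exp (real n * x)"
proof -
  have "(1+x)^n \<le> exp x ^ n" using assms by (intro power_mono) (auto simp: exp_ge_add_one_self add.commute)
  also have "\<dots> = exp (real n * x)" by (simp add: exp_of_nat_mult)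
  finally show ?thesis .
qed

lemma pow_diff_le:
  fixes a b :: real assumes "0 \<le> b" "b \<le> a" "a \<le> 1"
  shows "a^n - b^n \<le> real n * (a - b)"
proof (induction n)
  case 0 then show ?case by simp
next
  case (Suc n)
  have "a^Suc n - b^Suc n = a * (a^n - b^n) + b^n * (a - b)" by (simp add: algebra_simps)
  also have "\<dots> \<le> 1 * (a^n - b^n) + 1 * (a - b)"
  proof (intro add_mono mult_right_mono)
    show "0 \<le> a^n - b^n" using assms by (simp add: power_mono)
    show "b^n \<le> 1" using assms by (simp add: power_le_one)
  qed (use assms in auto)
  also have "\<dots> \<le> real (Suc n) * (a - b)" using Suc by (simp add: algebra_simps)
  finally show ?case .
qed

lemma exp_minus_le:
  fixes x :: real assumes "0 \<le> x" shows "exp (-x) - (1 - x) \<le> x^2"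
proof -
  have e: "1 + x \<le> exp x" by (simp add: exp_ge_add_one_self add.commute)
  have "exp (-x) = 1 / exp x" by (simp add: exp_minus field_simps)
  also have "\<dots> \<le> 1 / (1 + x)" using e assms by (intro divide_left_mono) auto
  finally have "exp (-x) - (1 - x) \<le> 1/(1+x) - (1 - x)" by simp
  also have "\<dots> = x^2 / (1 + x)" using assms by (simp add: field_simps power2_eq_square)
  also have "\<dots> \<le> x^2" using assms by (simp add: divide_le_eq) (simp add: power2_eq_square algebra_simps)
  finally show ?thesis .
qed

lemma one_minus_le_exp: fixes x :: real shows "1 - x \<le> exp (-x)"
  using exp_ge_add_one_self[of "-x"] by simp

lemma norm4:
  fixes a b c d :: "'a::real_normed_vector"
  shows "norm (a - b + c + d) \<le> norm a + norm b + norm c + norm d"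
proof -
  have 1: "norm (a - b + c + d) \<le> norm (a - b + c) + norm d" by (rule norm_triangle_ineq)
  have 2: "norm (a - b + c) \<le> norm (a - b) + norm c" by (rule norm_triangle_ineq)
  have 3: "norm (a - b) \<le> norm a + norm b" by (rule norm_triangle_ineq4)
  from 1 2 3 show ?thesis by linarith
qed

primrec euler :: "('a::real_vector \<Rightarrow> 'c \<Rightarrow> 'a) \<Rightarrow> real \<Rightarrow> (nat \<Rightarrow> 'c) \<Rightarrow> 'a \<Rightarrow> nat \<Rightarrow> 'a" where
  "euler f h uu y0 0 = y0"
| "euler f h uu y0 (Suc n) = euler f h uu y0 n + h *\<^sub>R f (euler f h uu y0 n) (uu n)"

theorem lemma1:
  fixes f :: "real^'n \<Rightarrow> real^'m \<Rightarrow> real^'n"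
    and g :: "real^'n \<Rightarrow> real^'m \<Rightarrow> real"
    and lam Lf Lg Lu Mf Mg :: real
    and Uad :: "(real^'m) set"
    and \<Omega> :: "(real^'n) set"
    and u :: "real \<Rightarrow> real^'m"
    and y :: "real \<Rightarrow> real^'n"
    and y0 :: "real^'n"
  assumes lam: "lam > 0"
    and U_compact: "compact Uad" and U_convex: "convex Uad"
    and f_lip_y: "\<And>z z' v. v \<in> Uad \<Longrightarrow> norm (f z v - f z' v) \<le> Lf * norm (z - z')"
    and f_lip_u: "\<And>z v v'. v \<in> Uad \<Longrightarrow> v' \<in> Uad \<Longrightarrow> norm (f z v - f z v') \<le> Lf * norm (v - v')"
    and g_lip_y: "\<And>z z' v. v \<in> Uad \<Longrightarrow> \<bar>g z v - g z' v\<bar> \<le> Lg * norm (z - z')"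
    and g_lip_u: "\<And>z v v'. v \<in> Uad \<Longrightarrow> v' \<in> Uad \<Longrightarrow> \<bar>g z v - g z v'\<bar> \<le> Lg * norm (v - v')"
    and f_cont: "continuous_on UNIV (\<lambda>(z, v). f z v)"
    and g_cont: "continuous_on UNIV (\<lambda>(z, v). g z v)"
    and Omega_poly: "polyhedron \<Omega>" and Omega_bdd: "bounded \<Omega>"
    and f_bound: "\<And>z v i. z \<in> \<Omega> \<Longrightarrow> v \<in> Uad \<Longrightarrow> \<bar>f z v $ i\<bar> \<le> Mf"
    and g_bound: "\<And>z v. z \<in> \<Omega> \<Longrightarrow> v \<in> Uad \<Longrightarrow> \<bar>g z v\<bar> \<le> Mg"
    and invariant: "\<exists>h0>0. \<forall>h. 0 < h \<and> h \<le> h0 \<longrightarrow>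
                       (\<forall>z\<in>\<Omega>. \<forall>v\<in>Uad. z + h *\<^sub>R f z v \<in> \<Omega>)"
    and u_meas: "set_borel_measurable lborel {0..} u"
    and u_L2: "set_integrable lborel {0..} (\<lambda>t. (norm (u t))\<^sup>2)"
    and u_adm: "AE t in lborel. 0 \<le> t \<longrightarrow> u t \<in> Uad"
    and u_lip: "\<And>t s. 0 \<le> t \<Longrightarrow> 0 \<le> s \<Longrightarrow> norm (u t - u s) \<le> Lu * \<bar>t - s\<bar>"
    and y0_in: "y0 \<in> \<Omega>"
    and y_init: "y 0 = y0"
    and y_ode: "\<And>t. 0 \<le> t \<Longrightarrow> (y has_vector_derivative f (y t) (u t)) (at t within {0..})"
  shows "\<forall>\<epsilon>>0. \<exists>\<delta>>0. \<forall>h k \<T>. 0 < h \<and> h < \<delta> \<and> 0 < k \<and> k < \<delta> \<and>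
            triangulation \<T> \<and> \<Union>\<T> = \<Omega> \<and> mesh \<T> = k \<longrightarrow>
            \<bar>J_cont g lam y u - J_hk f g lam \<T> h (\<lambda>i. u (real i * h)) y0\<bar> < \<epsilon>"
proof -
  have Ucl: "closed Uad" using U_compact compact_imp_closed by blast
  have Lu0: "0 \<le> Lu"
  proof -
    have "norm (u 1 - u 0) \<le> Lu" using u_lip[of 1 0] by simp
    then show ?thesis by (rule order_trans[OF norm_ge_zero])
  qed
  have u_cont: "continuous_on {0..} u"
    unfolding continuous_on_iff
  proof (intro ballI allI impI)
    fix x e :: real assume x: "x \<in> {0..}" and e: "0 < e"
    show "\<exists>d>0. \<forall>x'\<in>{0..}. dist x' x < d \<longrightarrow> dist (u x') (u x) < e"
    proof (intro exI[of _ "e/(Lu+1)"] conjI ballI impI)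
      show "0 < e/(Lu+1)" using e Lu0 by simp
      fix x' :: real assume x': "x' \<in> {0..}" and d: "dist x' x < e/(Lu+1)"
      have "dist (u x') (u x) \<le> Lu * \<bar>x' - x\<bar>" using u_lip x x' by (simp add: dist_norm)
      also have "\<dots> \<le> Lu * (e/(Lu+1))" using d Lu0 by (intro mult_left_mono) (auto simp: dist_real_def)
      also have "\<dots> < e" using e Lu0 by (simp add: field_simps)
      finally show "dist (u x') (u x) < e" .
    qed
  qed
  have u_in: "u t \<in> Uad" if t: "0 \<le> t" for t
  proof (rule ccontr)
    assume nt: "u t \<notin> Uad"
    have "open (- Uad)" using Ucl by auto
    then obtain e where e: "e > 0" "ball (u t) e \<subseteq> - Uad" using nt open_contains_ball by blast
    define r where "r = e / (Lu + 1)"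
    have r: "r > 0" using e Lu0 by (simp add: r_def)
    have bad: "{t<..<t+r} \<subseteq> {x \<in> space lborel. \<not> (0 \<le> x \<longrightarrow> u x \<in> Uad)}"
    proof
      fix s assume s: "s \<in> {t<..<t+r}"
      have "norm (u s - u t) \<le> Lu * \<bar>s - t\<bar>" using u_lip[of s t] s t by simp
      also have "\<dots> \<le> Lu * r" using s Lu0 by (intro mult_left_mono) auto
      also have "\<dots> < e" using e Lu0 by (simp add: r_def field_simps)
      finally have "u s \<in> ball (u t) e" by (simp add: dist_norm norm_minus_commute)
      with e s t show "s \<in> {x \<in> space lborel. \<not> (0 \<le> x \<longrightarrow> u x \<in> Uad)}" by auto
    qed
    from u_adm obtain N where N: "{x \<in> space lborel. \<not> (0 \<le> x \<longrightarrow> u x \<in> Uad)} \<subseteq> N"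
      "emeasure lborel N = 0" "N \<in> sets lborel" by (rule AE_E)
    have "emeasure lborel {t<..<t+r} \<le> emeasure lborel N" using bad N by (intro emeasure_mono) auto
    then show False using N r by simp
  qed
  have u0: "u 0 \<in> Uad" using u_in by simp
  obtain w :: "real^'n" where w: "norm w = 1" using vector_choose_size[of 1] by auto
  have "norm (f w (u 0) - f 0 (u 0)) \<le> Lf" using f_lip_y[OF u0, of w 0] w by simp
  then have Lf0: "0 \<le> Lf" by (rule order_trans[OF norm_ge_zero])
  have "\<bar>g w (u 0) - g 0 (u 0)\<bar> \<le> Lg" using g_lip_y[OF u0, of w 0] w by simp
  then have Lg0: "0 \<le> Lg" by (rule order_trans[OF abs_ge_zero])
  have Mg0: "0 \<le> Mg" using g_bound[OF y0_in u0] by linarith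
  obtain h0 where h0: "h0 > 0" and inv: "\<And>h z v. 0 < h \<Longrightarrow> h \<le> h0 \<Longrightarrow> z \<in> \<Omega> \<Longrightarrow> v \<in> Uad \<Longrightarrow> z + h *\<^sub>R f z v \<in> \<Omega>"
    using invariant by blast
  have Om_cl: "closed \<Omega>" and Om_cv: "convex \<Omega>"
    using Omega_poly polyhedron_imp_closed polyhedron_imp_convex by auto
  have y_cont: "continuous_on {0..} y"
    unfolding continuous_on_eq_continuous_within
  proof
    fix t :: real assume "t \<in> {0..}"
    then show "continuous (at t within {0..}) y"
      by (intro has_vector_derivative_continuous[OF y_ode]) simp
  qed
  have fyu_cont: "continuous_on {0..} (\<lambda>s. f (y s) (u s))"
  proof -
    have "continuous_on {0..} (\<lambda>s. (y s, u s))" using y_cont u_cont by (rule continuous_on_Pair)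
    from continuous_on_compose2[OF f_cont this] show ?thesis by simp
  qed
  have ftc: "((\<lambda>s. f (y s) (u s)) has_integral (y b - y a)) {a..b}" if "0 \<le> a" "a \<le> b" for a b
  proof (rule fundamental_theorem_of_calculus[OF that(2)])
    fix x assume x: "x \<in> {a..b}"
    then have "(y has_vector_derivative f (y x) (u x)) (at x within {0..})" using y_ode that by auto
    then show "(y has_vector_derivative f (y x) (u x)) (at x within {a..b})"
      by (rule has_vector_derivative_within_subset) (use that in auto)
  qed
  have ylip: "norm (y b - y a) \<le> B * (b - a)"
    if ab: "0 \<le> a" "a \<le> b" and Bb: "\<forall>s\<in>{a..b}. norm (f (y s) (u s)) \<le> B" for a b B
  proof -
    have "norm (f (y a) (u a)) \<le> B" using Bb ab by auto
    then have "0 \<le> B" by (rule order_trans[OF norm_ge_zero])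
    from has_integral_bound_real[OF this finite.emptyI ftc[OF ab]] Bb ab
    show ?thesis by simp
  qed
  have trunc: "norm (y (a+h) - y a - h *\<^sub>R f (y a) (u a)) \<le> h * (Lf*(B+Lu)*h)"
    if ah: "0 \<le> a" "0 \<le> h" and Bb: "\<forall>s\<in>{a..a+h}. norm (f (y s) (u s)) \<le> B" for a h B
  proof -
    let ?F = "f (y a) (u a)"
    have "norm (f (y a) (u a)) \<le> B" using Bb ah by auto
    then have B0: "0 \<le> B" by (rule order_trans[OF norm_ge_zero])
    have I: "((\<lambda>s. f (y s) (u s) - ?F) has_integral (y (a+h) - y a - h *\<^sub>R ?F)) {a..a+h}"
    proof -
      have c: "measure lborel {a..a+h} = h" using ah by simp
      have aah: "a \<le> a + h" using ah by simp
      show ?thesis using has_integral_diff[OF ftc[OF ah(1) aah] has_integral_const_real[of ?F a "a+h"]] unfolding c .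
    qed
    have pt: "norm (f (y s) (u s) - ?F) \<le> Lf*(B+Lu)*h" if s: "s \<in> {a..a+h}" for s
    proof -
      have ua: "u a \<in> Uad" "u s \<in> Uad" using u_in ah s by auto
      have "norm (y s - y a) \<le> B * (s - a)" using ylip[of a s B] Bb s ah by auto
      then have "norm (f (y s) (u s) - f (y a) (u s)) \<le> Lf * (B * (s - a))"
        by (rule order_trans[OF f_lip_y[OF ua(2)] mult_left_mono[OF _ Lf0]])
      also have "\<dots> \<le> Lf * (B * h)" using Lf0 B0 s by (intro mult_left_mono) auto
      finally have 1: "norm (f (y s) (u s) - f (y a) (u s)) \<le> Lf * (B * h)" .
      have "norm (f (y a) (u s) - ?F) \<le> Lf * norm (u s - u a)" using f_lip_u ua by blast
      also have "\<dots> \<le> Lf * (Lu * h)"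
      proof (intro mult_left_mono Lf0)
        have "Lu * (s - a) \<le> Lu * h" using Lu0 s by (intro mult_left_mono) auto
        then show "norm (u s - u a) \<le> Lu * h" using u_lip[of s a] s ah by simp
      qed
      finally have 2: "norm (f (y a) (u s) - ?F) \<le> Lf * (Lu * h)" .
      have "norm (f (y s) (u s) - ?F) \<le> norm (f (y s) (u s) - f (y a) (u s)) + norm (f (y a) (u s) - ?F)"
        by (rule norm_diff_triangle_le[where y="f (y a) (u s)"]) simp_all
      also have "\<dots> \<le> Lf*(B+Lu)*h" using 1 2 by (simp add: algebra_simps)
      finally show ?thesis .
    qed
    have nn: "0 \<le> Lf*(B+Lu)*h" using Lf0 B0 Lu0 ah by simp
    have "norm (y (a+h) - y a - h *\<^sub>R ?F) \<le> Lf*(B+Lu)*h * measure lborel {a..a+h}"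
      by (rule has_integral_bound_real[OF nn finite.emptyI I]) (rule pt, simp)
    then show ?thesis using ah by (simp add: mult_ac)
  qed
  have compare: "norm (y (real n * h) - z n) \<le> real n * h * (1 + h*Lf)^n * (D + Lf*(B+Lu)*h)"
    if h: "0 < h" and D: "0 \<le> D" and B0: "0 \<le> B" and Bb: "\<forall>s\<in>{0..T}. norm (f (y s) (u s)) \<le> B"
      and z0: "z 0 = y0"
      and zs: "\<And>n. real (Suc n) * h \<le> T \<Longrightarrow> norm (z (Suc n) - z n - h *\<^sub>R f (z n) (u (real n * h))) \<le> h * D"
      and n: "real n * h \<le> T" for h D B T z n
  proof -
    let ?E = "\<lambda>n. norm (y (real n * h) - z n)"
    show ?thesis
    proof (rule gronwall_disc[where E = ?E and Q = "\<lambda>n. real n * h \<le> T"])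
      show "?E 0 \<le> 0" using z0 y_init by simp
      show "real n * h \<le> T" by (rule n)
      show "0 \<le> h" using h by simp
      show "0 \<le> Lf" by (rule Lf0)
      show "0 \<le> D + Lf*(B+Lu)*h" using D Lf0 B0 Lu0 h by simp
      fix m assume m: "real (Suc m) * h \<le> T"
      moreover have "real m * h \<le> real (Suc m) * h" using h by (intro mult_right_mono) auto
      ultimately show "real m * h \<le> T" by linarith
      let ?a = "real m * h"
      have a0: "0 \<le> ?a" using h by simp
      have ah: "?a + h = real (Suc m) * h" by (simp add: distrib_right)
      have ua: "u ?a \<in> Uad" using u_in a0 by simp
      have Bb': "\<forall>s\<in>{?a..?a+h}. norm (f (y s) (u s)) \<le> B" using Bb m ah a0 by auto
      have t1: "norm (y (?a+h) - y ?a - h *\<^sub>R f (y ?a) (u ?a)) \<le> h * (Lf*(B+Lu)*h)"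
        using trunc[OF a0 _ Bb'] h by simp
      have t2: "norm (z (Suc m) - z m - h *\<^sub>R f (z m) (u ?a)) \<le> h * D" using zs[OF m] .
      have t3: "norm (h *\<^sub>R (f (y ?a) (u ?a) - f (z m) (u ?a))) \<le> h * (Lf * ?E m)"
      proof -
        have "norm (h *\<^sub>R (f (y ?a) (u ?a) - f (z m) (u ?a))) = h * norm (f (y ?a) (u ?a) - f (z m) (u ?a))"
          using h by simp
        also have "\<dots> \<le> h * (Lf * ?E m)" using f_lip_y[OF ua, of "y ?a" "z m"] h by (intro mult_left_mono) auto
        finally show ?thesis .
      qed
      have eq: "y (real (Suc m) * h) - z (Suc m) = (y (?a+h) - y ?a - h *\<^sub>R f (y ?a) (u ?a))
           - (z (Suc m) - z m - h *\<^sub>R f (z m) (u ?a)) + (y ?a - z m)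
           + h *\<^sub>R (f (y ?a) (u ?a) - f (z m) (u ?a))"
        unfolding ah[symmetric] scaleR_diff_right by (simp add: algebra_simps)
      have "?E (Suc m) \<le> norm (y (?a+h) - y ?a - h *\<^sub>R f (y ?a) (u ?a))
           + norm (z (Suc m) - z m - h *\<^sub>R f (z m) (u ?a)) + ?E m
           + norm (h *\<^sub>R (f (y ?a) (u ?a) - f (z m) (u ?a)))"
        by (rule ord_eq_le_trans[OF arg_cong[where f=norm, OF eq] norm4])
      also have "\<dots> \<le> h * (Lf*(B+Lu)*h) + h * D + ?E m + h * (Lf * ?E m)"
        using t1 t2 t3 by linarith
      also have "\<dots> = (1 + h*Lf) * ?E m + h * (D + Lf*(B+Lu)*h)" by (simp add: algebra_simps)
      finally show "?E (Suc m) \<le> (1 + h*Lf) * ?E m + h * (D + Lf*(B+Lu)*h)" .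
    qed
  qed
  have y_in: "y t \<in> \<Omega>" if t: "0 \<le> t" for t
  proof (cases "t = 0")
    case True then show ?thesis using y_init y0_in by simp
  next
    case False
    with t have tp: "0 < t" by simp
    have cK: "compact ((\<lambda>s. f (y s) (u s)) ` {0..t})"
      by (rule compact_continuous_image[OF continuous_on_subset[OF fyu_cont]]) auto
    then have "bounded ((\<lambda>s. f (y s) (u s)) ` {0..t})" by (rule compact_imp_bounded)
    then obtain B where B: "B > 0" "\<forall>x\<in>(\<lambda>s. f (y s) (u s)) ` {0..t}. norm x \<le> B"
      unfolding bounded_pos by blast
    have Bb: "\<forall>s\<in>{0..t}. norm (f (y s) (u s)) \<le> B" using B(2) by simp
    have "y t \<in> closure \<Omega>"
      unfolding closure_approachable
    proof (intro allI impI)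
      fix e :: real assume e: "e > 0"
      define C where "C = t * exp (Lf*t) * (Lf*(B+Lu)) * t"
      obtain N :: nat where N: "max (t/h0) (C/e) < real N" using reals_Archimedean2 by blast
      have N1: "t/h0 < real N" "C/e < real N" using N by auto
      have th0: "0 < t/h0" using tp h0 by simp
      have Npos: "0 < real N" using N1(1) th0 by linarith
      define hh where "hh = t / real N"
      have hh: "0 < hh" using tp Npos by (simp add: hh_def)
      have "t < h0 * real N" using N1(1) h0 by (simp add: field_simps)
      then have hh0: "hh \<le> h0" using Npos by (simp add: hh_def field_simps)
      have NH: "real N * hh = t" using Npos by (simp add: hh_def)
      let ?z = "euler f hh (\<lambda>i. u (real i * hh)) y0"
      have zin: "?z n \<in> \<Omega>" for n
      proof (induction n)
        case 0 show ?case using y0_in by simp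
      next
        case (Suc n)
        have "0 \<le> real n * hh" using hh by simp
        then have "u (real n * hh) \<in> Uad" by (rule u_in)
        then show ?case using inv[OF hh hh0 Suc] by simp
      qed
      have err: "norm (y (real N * hh) - ?z N) \<le> real N * hh * (1 + hh*Lf)^N * (0 + Lf*(B+Lu)*hh)"
      proof (rule compare[OF hh order_refl less_imp_le[OF B(1)] Bb])
        show "?z 0 = y0" by simp
        show "real N * hh \<le> t" using NH by simp
        fix n
        show "norm (?z (Suc n) - ?z n - hh *\<^sub>R f (?z n) (u (real n * hh))) \<le> hh * 0" by simp
      qed
      have "(1 + hh*Lf)^N \<le> exp (real N * (hh*Lf))" using hh Lf0 by (intro pow_le_exp) simp
      also have "\<dots> = exp (Lf*t)" using NH by (simp add: mult_ac)
      finally have pw: "(1 + hh*Lf)^N \<le> exp (Lf*t)" .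
      have K0: "0 \<le> Lf*(B+Lu)*hh" using Lf0 B(1) Lu0 hh by simp
      have "norm (y t - ?z N) \<le> t * (1 + hh*Lf)^N * (Lf*(B+Lu)*hh)" using err unfolding NH by simp
      also have "\<dots> \<le> t * exp (Lf*t) * (Lf*(B+Lu)*hh)"
        using pw t K0 by (intro mult_right_mono mult_left_mono) auto
      also have "\<dots> = C / real N" by (simp add: C_def hh_def)
      also have "\<dots> < e" using N1(2) e Npos by (simp add: field_simps)
      finally have "dist (?z N) (y t) < e" by (simp add: dist_norm norm_minus_commute)
      then show "\<exists>x\<in>\<Omega>. dist x (y t) < e" using zin by blast
    qed
    then show ?thesis using Om_cl by (simp add: closure_closed)
  qed
  define B where "B = real CARD('n) * Mf"
  have fB: "norm (f z v) \<le> B" if zv: "z \<in> \<Omega>" "v \<in> Uad" for z v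
  proof -
    have "norm (f z v) \<le> (\<Sum>i\<in>UNIV. \<bar>f z v $ i\<bar>)" by (rule norm_le_l1_cart)
    also have "\<dots> \<le> of_nat (card (UNIV::'n set)) * Mf" by (rule sum_bounded_above) (rule f_bound[OF zv])
    finally show ?thesis by (simp add: B_def)
  qed
  have B0: "0 \<le> B" using fB[OF y0_in u0] by (rule order_trans[OF norm_ge_zero])
  have Bt: "\<forall>s\<in>{a..b}. norm (f (y s) (u s)) \<le> B" if a0: "0 \<le> a" for a b
  proof
    fix s assume "s \<in> {a..b}"
    then have s0: "0 \<le> s" using a0 by simp
    show "norm (f (y s) (u s)) \<le> B" by (rule fB[OF y_in[OF s0] u_in[OF s0]])
  qed
  show ?thesis
  proof (intro allI impI)
    fix \<epsilon> :: real assume \<epsilon>: "\<epsilon> > 0"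
    define T where "T = 4*Mg/(lam^2*\<epsilon>)"
    define T1 where "T1 = T + 1"
    define X where "X = exp (Lf*T1)"
    define c1 where "c1 = Lg*(Lu + B + T1*X*Lf*(B+Lu)) + Mg*(lam + T1*lam^2)"
    define c2 where "c2 = Lg*(T1*X*Lf + 1)"
    define A where "A = c1 + c2"
    define \<delta> where "\<delta> = min (min 1 h0) (min (1/(2*lam)) (\<epsilon>/(2*(T1*A+1))))"
    have T0: "0 \<le> T" using Mg0 lam \<epsilon> by (simp add: T_def)
    have T11: "1 \<le> T1" using T0 by (simp add: T1_def)
    have X0: "0 \<le> X" by (simp add: X_def)
    have c10: "0 \<le> c1" using Lg0 Lu0 B0 T11 X0 Lf0 Mg0 lam by (simp add: c1_def)
    have c20: "0 \<le> c2" using Lg0 T11 X0 Lf0 by (simp add: c2_def)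
    have A0: "0 \<le> A" using c10 c20 by (simp add: A_def)
    have TA0: "0 \<le> T1*A" using T11 A0 by simp
    have \<delta>0: "0 < \<delta>" using h0 lam \<epsilon> TA0 by (simp add: \<delta>_def)
    show "\<exists>\<delta>>0. \<forall>h k \<T>. 0 < h \<and> h < \<delta> \<and> 0 < k \<and> k < \<delta> \<and>
            triangulation \<T> \<and> \<Union>\<T> = \<Omega> \<and> mesh \<T> = k \<longrightarrow>
            \<bar>J_cont g lam y u - J_hk f g lam \<T> h (\<lambda>i. u (real i * h)) y0\<bar> < \<epsilon>"
    proof (intro exI[of _ \<delta>] conjI allI impI)
      show "0 < \<delta>" by (rule \<delta>0)
      fix h k :: real and \<T> :: "(real^'n) set set"
      assume H: "0 < h \<and> h < \<delta> \<and> 0 < k \<and> k < \<delta> \<and> triangulation \<T> \<and> \<Union>\<T> = \<Omega> \<and> mesh \<T> = k"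
      then have h: "0 < h" "h < \<delta>" and k: "0 < k" "k < \<delta>" and tri: "triangulation \<T>"
        and UT: "\<Union>\<T> = \<Omega>" and mk: "mesh \<T> = k" by auto
      have hh0: "h \<le> h0" "h < 1" using h by (auto simp: \<delta>_def)
      have "h < 1/(2*lam)" using h by (simp add: \<delta>_def)
      then have lh: "lam * h < 1/2" using lam by (simp add: field_simps)
      define yh where "yh = yhat f \<T> h (\<lambda>i. u (real i * h)) y0"
      define un where "un n = u (real n * h)" for n
      define G where "G n = interp \<T> (\<lambda>z. g z (un n)) (yh n)" for n
      define q where "q = 1 - lam*h"
      define \<psi> where "\<psi> t = g (y t) (u t) * exp (- lam * t)" for t
      define N where "N = nat \<lceil>T/h\<rceil>"
      define Th where "Th = real N * h"
      have unU: "un n \<in> Uad" for n using u_in h by (simp add: un_def)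
      have lh0: "0 < lam * h" using lam h by simp
      have q: "0 < q" "q < 1" "0 \<le> q" using lh lh0 by (auto simp: q_def)
      have qe: "q \<le> exp (- (lam*h))" unfolding q_def by (rule one_minus_le_exp)
      have Th0: "0 \<le> Th" using h by (simp add: Th_def)
      have ThT: "T \<le> Th" "Th \<le> T1"
      proof -
        have Thn: "0 \<le> T/h" using T0 h by simp
        have "(0::real) \<le> of_int \<lceil>T/h\<rceil>" using le_of_int_ceiling[of "T/h"] Thn by linarith
        then have c0: "0 \<le> \<lceil>T/h\<rceil>" by simp
        then have rN: "real N = of_int \<lceil>T/h\<rceil>" by (simp add: N_def)
        have "T/h \<le> real N" using rN by simp
        then show "T \<le> Th" using h by (simp add: Th_def field_simps)
        have "real N < T/h + 1" using rN by linarith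
        then have "Th < (T/h + 1) * h" using h by (simp add: Th_def)
        also have "\<dots> = T + h" using h by (simp add: field_simps)
        finally show "Th \<le> T1" using hh0 by (simp add: T1_def)
      qed
      have yh_suc: "yh (Suc n) = yh n + h *\<^sub>R interp \<T> (\<lambda>z. f z (un n)) (yh n)" for n
        by (simp add: yh_def un_def)
      have yh_in: "yh n \<in> \<Omega>" for n
      proof (induction n)
        case 0 show ?case using y0_in by (simp add: yh_def)
      next
        case (Suc n)
        have "yh n + h *\<^sub>R interp \<T> (\<lambda>z. f z (un n)) (yh n) \<in> \<Union>\<T>"
        proof (rule interp_step_in[OF tri])
          show "yh n \<in> \<Union>\<T>" using Suc UT by simp
          show "convex (\<Union>\<T>)" using Om_cv UT by simp
          fix v assume "v \<in> \<Union>\<T>"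
          then show "v + h *\<^sub>R f v (un n) \<in> \<Union>\<T>" using inv[OF h(1) hh0(1) _ unU] UT by simp
        qed
        then show ?case using UT yh_suc by simp
      qed
      have yhT: "yh n \<in> \<Union>\<T>" for n using yh_in UT by simp
      have Gbd: "\<bar>G n\<bar> \<le> Mg" for n
      proof -
        have "G n \<in> cball 0 Mg" unfolding G_def
        proof (rule interp_in[OF tri yhT convex_cball])
          fix v assume "v \<in> \<Union>\<T>"
          then show "g v (un n) \<in> cball 0 Mg" using g_bound[OF _ unU] UT by simp
        qed
        then show ?thesis by simp
      qed
      have Gcl: "\<bar>g (yh n) (un n) - G n\<bar> \<le> Lg*k" for n
      proof -
        have "norm (G n - g (yh n) (un n)) \<le> Lg*k" unfolding G_def
        proof (rule interp_close[OF tri yhT])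
          fix v assume v: "v \<in> \<Union>\<T>" "dist v (yh n) \<le> mesh \<T>"
          have "norm (g v (un n) - g (yh n) (un n)) \<le> Lg * norm (v - yh n)"
            using g_lip_y[OF unU] by simp
          also have "\<dots> \<le> Lg * k" using v mk Lg0 by (intro mult_left_mono) (auto simp: dist_norm)
          finally show "norm (g v (un n) - g (yh n) (un n)) \<le> Lg*k" .
        qed
        then show ?thesis by (simp add: abs_minus_commute)
      qed
      have fcl: "norm (interp \<T> (\<lambda>z. f z (un n)) (yh n) - f (yh n) (un n)) \<le> Lf*k" for n
      proof (rule interp_close[OF tri yhT])
        fix v assume v: "v \<in> \<Union>\<T>" "dist v (yh n) \<le> mesh \<T>"
        have "norm (f v (un n) - f (yh n) (un n)) \<le> Lf * norm (v - yh n)"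
          using f_lip_y[OF unU] by simp
        also have "\<dots> \<le> Lf * k" using v mk Lf0 by (intro mult_left_mono) (auto simp: dist_norm)
        finally show "norm (f v (un n) - f (yh n) (un n)) \<le> Lf*k" .
      qed
      have Ebd: "norm (y (real n * h) - yh n) \<le> T1 * X * (Lf*k + Lf*(B+Lu)*h)" if nT: "real n * h \<le> T1" for n
      proof -
        have Lk: "0 \<le> Lf*k" using Lf0 k by simp
        have "norm (y (real n * h) - yh n) \<le> real n * h * (1 + h*Lf)^n * (Lf*k + Lf*(B+Lu)*h)"
        proof (rule compare[OF h(1) Lk B0 Bt[OF order_refl]])
          show "yh 0 = y0" by (simp add: yh_def)
          show "real n * h \<le> T1" by (rule nT)
          fix m
          have "yh (Suc m) - yh m - h *\<^sub>R f (yh m) (u (real m * h))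
              = h *\<^sub>R (interp \<T> (\<lambda>z. f z (un m)) (yh m) - f (yh m) (un m))"
            by (simp add: yh_suc un_def scaleR_diff_right)
          also have "norm \<dots> \<le> h * (Lf * k)" using fcl[of m] h by (simp add: mult_left_mono)
          finally show "norm (yh (Suc m) - yh m - h *\<^sub>R f (yh m) (u (real m * h))) \<le> h * (Lf*k)" .
        qed
        also have "\<dots> \<le> T1 * X * (Lf*k + Lf*(B+Lu)*h)"
        proof (intro mult_right_mono mult_mono)
          show "real n * h \<le> T1" by (rule nT)
          have "(1 + h*Lf)^n \<le> exp (real n * (h*Lf))" using h Lf0 by (intro pow_le_exp) simp
          also have "\<dots> \<le> exp (Lf * T1)" using nT Lf0 by (simp add: mult_ac mult_left_mono)
          finally show "(1 + h*Lf)^n \<le> X" by (simp add: X_def)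
          show "0 \<le> T1" using T11 by simp
          show "0 \<le> (1 + h*Lf)^n" using h Lf0 by simp
          show "0 \<le> Lf*k + Lf*(B+Lu)*h" using Lf0 k B0 Lu0 h by simp
        qed
        finally show ?thesis .
      qed
      have pt: "\<bar>\<psi> t - q^n * G n\<bar> \<le> \<delta> * A"
        if n: "real (Suc n) * h \<le> T1" and t: "t \<in> {real n * h .. real (Suc n) * h}" for n t
      proof -
        let ?a = "real n * h"
        have sa: "real (Suc n) * h = ?a + h" by (simp add: distrib_right)
        have a0: "0 \<le> ?a" using h by simp
        have ta: "?a \<le> t" "t \<le> ?a + h" using t sa by auto
        have t0: "0 \<le> t" using a0 ta by linarith
        have aT1: "?a \<le> T1" using n sa h by linarith
        have ut: "u t \<in> Uad" by (rule u_in[OF t0])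
        have "\<bar>g (y t) (u t) - g (y t) (un n)\<bar> \<le> Lg * norm (u t - un n)" by (rule g_lip_u[OF ut unU])
        also have "\<dots> \<le> Lg * (Lu * h)"
        proof (rule mult_left_mono[OF _ Lg0])
          have "norm (u t - un n) \<le> Lu * \<bar>t - ?a\<bar>" unfolding un_def by (rule u_lip[OF t0 a0])
          also have "\<dots> \<le> Lu * h" using ta Lu0 by (intro mult_left_mono) auto
          finally show "norm (u t - un n) \<le> Lu * h" .
        qed
        finally have g1: "\<bar>g (y t) (u t) - g (y t) (un n)\<bar> \<le> Lg * (Lu * h)" .
        have "norm (y t - y ?a) \<le> B * (t - ?a)" by (rule ylip[OF a0 ta(1) Bt[OF a0]])
        also have "\<dots> \<le> B * h" using ta B0 by (intro mult_left_mono) auto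
        finally have y1: "norm (y t - y ?a) \<le> B * h" .
        have E: "norm (y ?a - yh n) \<le> T1 * X * (Lf*k + Lf*(B+Lu)*h)" by (rule Ebd[OF aT1])
        have "norm (y t - yh n) \<le> norm (y t - y ?a) + norm (y ?a - yh n)" by (rule norm_diff_triangle_le[OF order_refl order_refl])
        then have y2: "norm (y t - yh n) \<le> B*h + T1 * X * (Lf*k + Lf*(B+Lu)*h)" using y1 E by linarith
        have "\<bar>g (y t) (un n) - g (yh n) (un n)\<bar> \<le> Lg * norm (y t - yh n)" by (rule g_lip_y[OF unU])
        also have "\<dots> \<le> Lg * (B*h + T1 * X * (Lf*k + Lf*(B+Lu)*h))" using y2 Lg0 by (rule mult_left_mono)
        finally have g2: "\<bar>g (y t) (un n) - g (yh n) (un n)\<bar> \<le> Lg * (B*h + T1 * X * (Lf*k + Lf*(B+Lu)*h))" .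
        define P1 where "P1 = Lg * (Lu * h) + Lg * (B*h + T1 * X * (Lf*k + Lf*(B+Lu)*h)) + Lg*k"
        have g3: "\<bar>g (y t) (u t) - G n\<bar> \<le> P1"
          using g1 g2 Gcl[of n] unfolding P1_def by linarith
        define e where "e = exp (- lam * t)"
        define E0 where "E0 = exp (- lam * ?a)"
        have e0: "0 < e" "e \<le> 1" using lam t0 by (auto simp: e_def)
        have E01: "0 < E0" "E0 \<le> 1" using lam a0 by (auto simp: E0_def)
        have e_le: "e \<le> E0" using lam ta by (simp add: e_def E0_def)
        have e_ge: "E0 - lam*h \<le> e"
        proof -
          have "e = E0 * exp (- (lam * (t - ?a)))" by (simp add: e_def E0_def flip: exp_add) (simp add: algebra_simps)
          moreover have "1 - lam * (t - ?a) \<le> exp (- (lam * (t - ?a)))" by (rule one_minus_le_exp)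
          ultimately have "E0 * (1 - lam * (t - ?a)) \<le> e" using E01 by (simp add: mult_left_mono)
          moreover have "E0 * (lam * (t - ?a)) \<le> 1 * (lam * h)"
            using E01 lam ta by (intro mult_mono) auto
          ultimately show ?thesis by (simp add: algebra_simps)
        qed
        have qE: "q^n \<le> E0"
        proof -
          have "q^n \<le> exp (- (lam*h)) ^ n" using qe q by (intro power_mono) auto
          also have "\<dots> = E0" by (simp add: E0_def flip: exp_of_nat_mult; (simp add: algebra_simps)?)
          finally show ?thesis .
        qed
        have Eq: "E0 - q^n \<le> T1*lam^2*h"
        proof -
          have "exp (- (lam*h)) ^ n - q^n \<le> real n * (exp (- (lam*h)) - q)"
            by (rule pow_diff_le[OF q(3) qe]) (use lh0 in simp)
          also have "\<dots> \<le> real n * (lam*h)^2"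
            using exp_minus_le[of "lam*h"] lh0 by (intro mult_left_mono) (auto simp: q_def)
          also have "\<dots> = ?a * (lam^2 * h)" by (simp add: power2_eq_square)
          also have "\<dots> \<le> T1 * (lam^2 * h)" using aT1 h by (intro mult_right_mono) auto
          finally show ?thesis by (simp add: E0_def flip: exp_of_nat_mult; (simp add: algebra_simps)?)
        qed
        define P2 where "P2 = lam*h + T1*lam^2*h"
        have eq2: "\<bar>e - q^n\<bar> \<le> P2" using e_le e_ge qE Eq lh0 unfolding P2_def by linarith
        have "\<psi> t - q^n * G n = (g (y t) (u t) - G n) * e + G n * (e - q^n)"
          by (simp add: \<psi>_def e_def algebra_simps)
        then have "\<bar>\<psi> t - q^n * G n\<bar> = \<bar>(g (y t) (u t) - G n) * e + G n * (e - q^n)\<bar>" by simp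
        also have "\<dots> \<le> \<bar>(g (y t) (u t) - G n) * e\<bar> + \<bar>G n * (e - q^n)\<bar>" by (rule abs_triangle_ineq)
        also have "\<dots> = \<bar>g (y t) (u t) - G n\<bar> * e + \<bar>G n\<bar> * \<bar>e - q^n\<bar>"
          using e0 by (simp add: abs_mult)
        also have "\<dots> \<le> P1 * 1 + Mg * P2"
          using g3 e0 Gbd[of n] eq2 by (intro add_mono mult_mono) auto
        also have "\<dots> = h * c1 + k * c2"
          by (simp add: P1_def P2_def c1_def c2_def algebra_simps)
        also have "\<dots> \<le> \<delta> * c1 + \<delta> * c2"
          using h k c10 c20 by (intro add_mono mult_right_mono) auto
        also have "\<dots> = \<delta> * A" by (simp add: A_def algebra_simps)
        finally show ?thesis .
      qed
      show "\<bar>J_cont g lam y u - J_hk f g lam \<T> h (\<lambda>i. u (real i * h)) y0\<bar> < \<epsilon>"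
      proof -
        have \<psi>c: "continuous_on {0..} \<psi>"
        proof -
          have "continuous_on {0..} (\<lambda>s. (y s, u s))" using y_cont u_cont by (rule continuous_on_Pair)
          from continuous_on_compose2[OF g_cont this]
          have "continuous_on {0..} (\<lambda>s. g (y s) (u s))" by simp
          then show ?thesis unfolding \<psi>_def by (intro continuous_intros)
        qed
        have \<psi>bd: "norm (\<psi> t) \<le> Mg * exp (- lam * t)" if "t \<in> {0..}" for t
        proof -
          have t0: "0 \<le> t" using that by simp
          have "\<bar>g (y t) (u t)\<bar> \<le> Mg" by (rule g_bound[OF y_in[OF t0] u_in[OF t0]])
          then show ?thesis by (simp add: \<psi>_def abs_mult mult_right_mono)
        qed
        have expI: "((\<lambda>t. Mg * exp (- lam * t)) has_integral (Mg * (exp (- lam * c) / lam))) {c..}" for c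
          by (rule has_integral_mult_right[OF has_integral_exp_minus_to_infinity[OF lam]])
        have expint: "(\<lambda>t. Mg * exp (- lam * t)) integrable_on {c..}" for c
          using expI[of c] by blast
        have \<psi>abs: "\<psi> absolutely_integrable_on {c..}" if c0: "0 \<le> c" for c
        proof (rule measurable_bounded_by_integrable_imp_absolutely_integrable[OF _ _ expint[of c]])
          have "continuous_on {c..} \<psi>" by (rule continuous_on_subset[OF \<psi>c]) (use c0 in auto)
          then show "\<psi> \<in> borel_measurable (lebesgue_on {c..})"
            by (rule continuous_imp_measurable_on_sets_lebesgue) simp
          show "{c..} \<in> sets lebesgue" by simp
          fix x assume "x \<in> {c..}"
          then show "norm (\<psi> x) \<le> Mg * exp (- lam * x)" using \<psi>bd c0 by simp
        qed
        have \<psi>int: "\<psi> integrable_on {c..}" if "0 \<le> c" for c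
          by (rule set_lebesgue_integral_eq_integral(1)[OF \<psi>abs[OF that]])
        have Jc: "J_cont g lam y u = integral {0..} \<psi>"
        proof -
          have m: "(\<lambda>x. indicator {0..} x *\<^sub>R \<psi> x) \<in> borel_measurable lborel"
            using borel_measurable_continuous_on_indicator[OF _ \<psi>c] by simp
          have "integrable lebesgue (\<lambda>x. indicator {0..} x *\<^sub>R \<psi> x)"
            using \<psi>abs[of 0] unfolding set_integrable_def by simp
          then have "integrable lborel (\<lambda>x. indicator {0..} x *\<^sub>R \<psi> x)"
            using integrable_completion[OF m] by simp
          then have si: "set_integrable lborel {0..} \<psi>" unfolding set_integrable_def .
          have "J_cont g lam y u = (LINT t:{0..}|lborel. \<psi> t)" by (simp add: J_cont_def \<psi>_def)
          also have "\<dots> = integral {0..} \<psi>" by (rule set_borel_integral_eq_integral(2)[OF si])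
          finally show ?thesis .
        qed
        have split: "integral {0..} \<psi> = integral {0..Th} \<psi> + integral {Th..} \<psi>"
        proof -
          have i1: "\<psi> integrable_on {0..Th}"
            by (rule integrable_continuous_real[OF continuous_on_subset[OF \<psi>c]]) auto
          have "(\<psi> has_integral (integral {0..Th} \<psi> + integral {Th..} \<psi>)) ({0..Th} \<union> {Th..})"
          proof (rule has_integral_Un[OF integrable_integral[OF i1] integrable_integral[OF \<psi>int[OF Th0]]])
            have "{0..Th} \<inter> {Th..} = {Th}" using Th0 by auto
            then show "negligible ({0..Th} \<inter> {Th..})" by simp
          qed
          moreover have "{0..Th} \<union> {Th..} = {0::real..}" using Th0 by auto
          ultimately show ?thesis by (simp add: integral_unique)
        qed
        have eT: "exp (- lam * Th) \<le> exp (- lam * T)" using ThT lam by simp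
        have W0: "0 \<le> exp (- lam * T)" by simp
        have tailc: "\<bar>integral {Th..} \<psi>\<bar> \<le> Mg * exp (- lam * T) / lam"
        proof -
          have "norm (integral {Th..} \<psi>) \<le> integral {Th..} (\<lambda>t. Mg * exp (- lam * t))"
            by (rule Henstock_Kurzweil_Integration.integral_norm_bound_integral[OF \<psi>int[OF Th0] expint]) (use \<psi>bd Th0 in auto)
          also have "\<dots> = Mg * (exp (- lam * Th) / lam)" by (rule integral_unique[OF expI])
          also have "\<dots> \<le> Mg * (exp (- lam * T) / lam)"
            using eT lam Mg0 by (intro mult_left_mono divide_right_mono) auto
          finally show ?thesis by simp
        qed
        have fsum: "integral {0..real m * h} \<psi> = (\<Sum>i<m. integral {real i * h..real (Suc i) * h} \<psi>)" for m
        proof (induction m)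
          case 0 show ?case by simp
        next
          case (Suc m)
          have i1: "\<psi> integrable_on {0..real (Suc m) * h}"
            by (rule integrable_continuous_real[OF continuous_on_subset[OF \<psi>c]]) auto
          have "integral {0..real m * h} \<psi> + integral {real m * h..real (Suc m) * h} \<psi> = integral {0..real (Suc m) * h} \<psi>"
            by (rule Henstock_Kurzweil_Integration.integral_combine[OF _ _ i1]) (use h in auto)
          then show ?case using Suc by simp
        qed
        have per: "\<bar>integral {real i * h..real (Suc i) * h} \<psi> - h * (q^i * G i)\<bar> \<le> h * (\<delta> * A)" if iN: "i < N" for i
        proof -
          let ?a = "real i * h"
          have sa: "real (Suc i) * h = ?a + h" by (simp add: distrib_right)
          have a0: "0 \<le> ?a" using h by simp
          have i1: "\<psi> integrable_on {?a..?a+h}"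
            by (rule integrable_continuous_real[OF continuous_on_subset[OF \<psi>c]]) (use a0 in auto)
          have I: "((\<lambda>t. \<psi> t - q^i * G i) has_integral (integral {?a..?a+h} \<psi> - measure lborel {?a..?a+h} *\<^sub>R (q^i * G i))) {?a..?a+h}"
            by (rule has_integral_diff[OF integrable_integral[OF i1] has_integral_const_real])
          have ms: "measure lborel {?a..?a+h} = h" using h by simp
          have nn: "0 \<le> \<delta> * A" using \<delta>0 A0 by simp
          have SiN: "real (Suc i) \<le> real N" using iN by simp
          have "real (Suc i) * h \<le> Th" unfolding Th_def using SiN h by (intro mult_right_mono) auto
          then have ST: "real (Suc i) * h \<le> T1" using ThT by linarith
          have "norm (integral {?a..?a+h} \<psi> - measure lborel {?a..?a+h} *\<^sub>R (q^i * G i)) \<le> \<delta> * A * measure lborel {?a..?a+h}"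
          proof (rule has_integral_bound_real[OF nn finite.emptyI I])
            fix x assume "x \<in> {?a..?a+h} - {}"
            then have "x \<in> {real i * h..real (Suc i) * h}" using sa by simp
            then show "norm (\<psi> x - q^i * G i) \<le> \<delta> * A" using pt[OF ST] by simp
          qed
          then show ?thesis unfolding ms sa by (simp add: mult_ac)
        qed
        have finerr: "\<bar>integral {0..Th} \<psi> - h * (\<Sum>i<N. q^i * G i)\<bar> \<le> T1 * (\<delta> * A)"
        proof -
          have eqS: "integral {0..Th} \<psi> - h * (\<Sum>i<N. q^i * G i)
              = (\<Sum>i<N. integral {real i * h..real (Suc i) * h} \<psi> - h * (q^i * G i))"
            unfolding Th_def fsum by (simp add: sum_subtractf sum_distrib_left)
          have "\<bar>integral {0..Th} \<psi> - h * (\<Sum>i<N. q^i * G i)\<bar>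
              = \<bar>\<Sum>i<N. integral {real i * h..real (Suc i) * h} \<psi> - h * (q^i * G i)\<bar>"
            unfolding eqS ..
          also have "\<dots> \<le> (\<Sum>i<N. \<bar>integral {real i * h..real (Suc i) * h} \<psi> - h * (q^i * G i)\<bar>)"
            by (rule sum_abs)
          also have "\<dots> \<le> (\<Sum>i<N. h * (\<delta> * A))" 
          proof (rule sum_mono)
            fix i assume "i \<in> {..<N}"
            then have "i < N" by simp
            then show "\<bar>integral {real i * h..real (Suc i) * h} \<psi> - h * (q^i * G i)\<bar> \<le> h * (\<delta> * A)" by (rule per)
          qed
          also have "\<dots> = Th * (\<delta> * A)" by (simp add: Th_def)
          also have "\<dots> \<le> T1 * (\<delta> * A)" using ThT \<delta>0 A0 by (intro mult_right_mono) auto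
          finally show ?thesis .
        qed
        have nG: "norm (q^n * G n) \<le> Mg * q^n" for n
          using Gbd[of n] q by (simp add: abs_mult mult_right_mono mult.commute)
        have summ: "summable (\<lambda>n. q^n * G n)"
          by (rule summable_comparison_test[OF _ summable_mult[OF summable_geometric]]) (use nG q in auto)
        have Jd: "J_hk f g lam \<T> h (\<lambda>i. u (real i * h)) y0 = h * (\<Sum>n. q^n * G n)"
          unfolding J_hk_def q_def G_def yh_def un_def by simp
        have spl: "(\<Sum>n. q^n * G n) = (\<Sum>n. q^(n+N) * G (n+N)) + (\<Sum>i<N. q^i * G i)"
          by (rule suminf_split_initial_segment[OF summ])
        have taild: "\<bar>\<Sum>n. q^(n+N) * G (n+N)\<bar> \<le> Mg * q^N * (1 / (1 - q))"
        proof -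
          have nG2: "norm (q^(n+N) * G (n+N)) \<le> (Mg * q^N) * q^n" for n
            using nG[of "n+N"] by (simp add: power_add mult_ac)
          have sg: "summable (\<lambda>n. (Mg * q^N) * q^n)" using q by (intro summable_mult summable_geometric) simp
          have sn: "summable (\<lambda>n. norm (q^(n+N) * G (n+N)))"
            by (rule summable_comparison_test[OF _ sg]) (use nG2 in auto)
          have "norm (\<Sum>n. q^(n+N) * G (n+N)) \<le> (\<Sum>n. norm (q^(n+N) * G (n+N)))" by (rule summable_norm[OF sn])
          also have "\<dots> \<le> (\<Sum>n. (Mg * q^N) * q^n)" by (rule suminf_le[OF nG2 sn sg])
          also have "\<dots> = Mg * q^N * (1 / (1 - q))" using q by (simp add: suminf_mult suminf_geometric)
          finally show ?thesis by simp
        qed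
        have qN: "q^N \<le> exp (- lam * T)"
        proof -
          have "q^N \<le> exp (- (lam*h)) ^ N" using qe q by (intro power_mono) auto
          also have "\<dots> = exp (- lam * Th)" by (simp add: Th_def flip: exp_of_nat_mult; (simp add: algebra_simps)?)
          also have "\<dots> \<le> exp (- lam * T)" by (rule eT)
          finally show ?thesis .
        qed
        have tail2: "\<bar>h * (\<Sum>n. q^(n+N) * G (n+N))\<bar> \<le> Mg * exp (- lam * T) / lam"
        proof -
          have "\<bar>h * (\<Sum>n. q^(n+N) * G (n+N))\<bar> = h * \<bar>\<Sum>n. q^(n+N) * G (n+N)\<bar>"
            using h by (simp add: abs_mult)
          also have "\<dots> \<le> h * (Mg * q^N * (1 / (1 - q)))"
            using taild h by (intro mult_left_mono) auto
          also have "\<dots> = Mg * q^N / lam" using h lam by (simp add: q_def field_simps)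
          also have "\<dots> \<le> Mg * exp (- lam * T) / lam"
            using qN Mg0 lam by (intro divide_right_mono mult_left_mono) auto
          finally show ?thesis .
        qed
        define W where "W = exp (- lam * T)"
        have W0: "0 \<le> W" by (simp add: W_def)
        have "1 + lam * T \<le> exp (lam * T)" by (simp add: exp_ge_add_one_self add.commute)
        then have W1: "W * (1 + lam * T) \<le> 1"
          by (simp add: W_def exp_minus field_simps)
        have lT: "lam * T * (lam * \<epsilon>) = 4 * Mg" using lam \<epsilon> by (simp add: T_def field_simps power2_eq_square)
        have "4 * Mg * W = (lam * \<epsilon>) * (lam * T * W)" using lT by (simp add: algebra_simps)
        also have "\<dots> \<le> (lam * \<epsilon>) * (W * (1 + lam * T))"
          using lam \<epsilon> W0 by (intro mult_left_mono) (auto simp: algebra_simps)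
        also have "\<dots> \<le> lam * \<epsilon>" using W1 lam \<epsilon> by (simp add: mult_left_le)
        finally have W4: "4 * Mg * W \<le> lam * \<epsilon>" .
        have tails: "2 * (Mg * W / lam) \<le> \<epsilon> / 2" using W4 lam by (simp add: field_simps)
        have dle: "\<delta> \<le> \<epsilon> / (2 * (T1 * A + 1))" by (simp add: \<delta>_def)
        have "T1 * (\<delta> * A) = (T1 * A) * \<delta>" by (simp add: mult_ac)
        also have "\<dots> \<le> T1 * A * (\<epsilon> / (2 * (T1 * A + 1)))"
          using dle TA0 by (rule mult_left_mono)
        also have "\<dots> < \<epsilon> / 2" using TA0 \<epsilon> by (simp add: field_simps)
        finally have fe: "T1 * (\<delta> * A) < \<epsilon> / 2" .
        have eqJ: "J_cont g lam y u - J_hk f g lam \<T> h (\<lambda>i. u (real i * h)) y0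
            = (integral {0..Th} \<psi> - h * (\<Sum>i<N. q^i * G i)) + integral {Th..} \<psi> - h * (\<Sum>n. q^(n+N) * G (n+N))"
          unfolding Jc Jd split spl by (simp add: algebra_simps)
        have "\<bar>J_cont g lam y u - J_hk f g lam \<T> h (\<lambda>i. u (real i * h)) y0\<bar>
            = \<bar>(integral {0..Th} \<psi> - h * (\<Sum>i<N. q^i * G i)) + integral {Th..} \<psi> - h * (\<Sum>n. q^(n+N) * G (n+N))\<bar>"
          unfolding eqJ ..
        also have "\<dots> \<le> T1 * (\<delta> * A) + Mg * W / lam + Mg * W / lam"
          using finerr tailc tail2 unfolding W_def by linarith
        also have "\<dots> < \<epsilon>" using fe tails by linarith
        finally show ?thesis .
      qed
    qed
  qed
qed

end
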